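(* Let $H$ be a planar graph that does not contain any removable cycle of length at most $10$, and let $K$ be a $4$-clique in $H$. Then: (1) every simple cycle $C$ in $H$ of length $5$ shares no edge with $K$; (2) every $4$-clique $K'$ in $H$ with $K'\neq K$ shares no edge with $K$; (3) every simple cycle $C$ in $H$ of length $3$ shares no edge with $K$ unless $V(C)\subseteq V(K)$.
   Context: A simple cycle in a graph $H$ is a sequence $(v_1,\dots,v_k)$ of $k>2$ distinct vertices with consecutive vertices adjacent and $v_k$ adjacent to $v_1$; $V(C)$, $E(C)$ are its vertex and edge sets and its length is $|V(C)|$. A $4$-clique is a subgraph isomorphic to the complete graph on $4$ vertices. A simple cycle $C$ in $H$ is removable if the induced subgraph $H[V(C)]$ is neither isomorphic to a complete graph nor to a cycle graph of odd length. *)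

theory Defs
  imports "HOL-Analysis.Analysis"
begin

definition simple_graph :: "'a set \<Rightarrow> 'a set set \<Rightarrow> bool" where
  "simple_graph V E \<longleftrightarrow> finite V \<and> (\<forall>e\<in>E. \<exists>u v. e = {u, v} \<and> u \<noteq> v \<and> u \<in> V \<and> v \<in> V)"

definition planar :: "'a set \<Rightarrow> 'a set set \<Rightarrow> bool" where
  "planar V E \<longleftrightarrow> (\<exists>(f :: 'a \<Rightarrow> complex) (g :: 'a set \<Rightarrow> real \<Rightarrow> complex).
      inj_on f V \<and>
      (\<forall>e\<in>E. arc (g e) \<and> {pathstart (g e), pathfinish (g e)} = f ` e
              \<and> path_image (g e) \<inter> f ` V = f ` e) \<and>
      (\<forall>e\<in>E. \<forall>e'\<in>E. e \<noteq> e' \<longrightarrow> path_image (g e) \<inter> path_image (g e') = f ` (e \<inter> e')))"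

definition cycle_edges :: "'a list \<Rightarrow> 'a set set" where
  "cycle_edges vs = {{vs ! i, vs ! ((i + 1) mod length vs)} | i. i < length vs}"

definition simple_cycle :: "'a set \<Rightarrow> 'a set set \<Rightarrow> 'a list \<Rightarrow> bool" where
  "simple_cycle V E vs \<longleftrightarrow> length vs > 2 \<and> distinct vs \<and> set vs \<subseteq> V \<and> cycle_edges vs \<subseteq> E"

definition induced_edges :: "'a set set \<Rightarrow> 'a set \<Rightarrow> 'a set set" where
  "induced_edges E S = {e \<in> E. e \<subseteq> S}"

definition is_complete_graph :: "'a set \<Rightarrow> 'a set set \<Rightarrow> bool" where
  "is_complete_graph S F \<longleftrightarrow> F = {{u, v} | u v. u \<in> S \<and> v \<in> S \<and> u \<noteq> v}"

definition is_odd_cycle_graph :: "'a set \<Rightarrow> 'a set set \<Rightarrow> bool" where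
  "is_odd_cycle_graph S F \<longleftrightarrow> (\<exists>ws. distinct ws \<and> length ws > 2 \<and> odd (length ws)
      \<and> set ws = S \<and> F = cycle_edges ws)"

definition removable :: "'a set \<Rightarrow> 'a set set \<Rightarrow> 'a list \<Rightarrow> bool" where
  "removable V E vs \<longleftrightarrow> simple_cycle V E vs \<and>
     \<not> is_complete_graph (set vs) (induced_edges E (set vs)) \<and>
     \<not> is_odd_cycle_graph (set vs) (induced_edges E (set vs))"

definition four_clique :: "'a set \<Rightarrow> 'a set set \<Rightarrow> 'a set \<Rightarrow> bool" where
  "four_clique V E Q \<longleftrightarrow> Q \<subseteq> V \<and> card Q = 4 \<and> (\<forall>u\<in>Q. \<forall>v\<in>Q. u \<noteq> v \<longrightarrow> {u, v} \<in> E)"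

definition clique_edges :: "'a set \<Rightarrow> 'a set set" where
  "clique_edges Q = {{u, v} | u v. u \<in> Q \<and> v \<in> Q \<and> u \<noteq> v}"

end

theory Submission
  imports Defs
begin


lemma stay_inside:
  assumes "connected S" "S \<inter> G = {}" "x \<in> S" "x \<in> inside G"
  shows "S \<subseteq> inside G"
proof
  fix y assume y: "y \<in> S"
  show "y \<in> inside G"
  proof (rule ccontr)
    assume "y \<notin> inside G"
    with y assms(2) have "y \<in> outside G" using inside_Un_outside by blast
    then show False using inside_outside_intersect_connected[OF assms(1)] assms y by blast
  qed
qed

lemma arc_tail:
  fixes g :: "real \<Rightarrow> complex"
  assumes "arc g" "path_image g \<inter> G \<subseteq> {pathstart g}" "0 < t" "t \<le> 1"
  shows "g t \<in> inside G \<longleftrightarrow> pathfinish g \<in> inside G"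
proof -
  let ?S = "g ` {t..1}"
  have con: "connected ?S"
    using connected_path_image[of "subpath t 1 g"] assms path_image_subpath[of t 1 g]
    by (metis arc_imp_path atLeastAtMost_iff path_subpath zero_le_one order.trans less_imp_le order_refl)
  have inj: "inj_on g {0..1}" using assms(1) arc_def by blast
  have disj: "?S \<inter> G = {}"
  proof (rule ccontr)
    assume "?S \<inter> G \<noteq> {}"
    then obtain s where s: "s \<in> {t..1}" "g s \<in> G" by blast
    then have "g s \<in> path_image g" using assms unfolding path_image_def by auto
    with s assms(2) have "g s = g 0" unfolding pathstart_def by blast
    with inj s assms(3) have "s = 0" by (auto simp: inj_on_def)
    with s assms(3) show False by auto
  qed
  have t1: "g t \<in> ?S" "g 1 \<in> ?S" using assms by auto
  show ?thesis
    using stay_inside[OF con disj] t1 unfolding pathfinish_def by blast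
qed

lemma arc_avoid:
  fixes g :: "real \<Rightarrow> complex"
  assumes "arc g" "path_image g \<inter> G \<subseteq> {pathstart g}" "pathstart g \<in> G"
     "pathfinish g \<notin> inside G"
  shows "path_image g \<inter> inside G = {}"
proof (rule ccontr)
  assume "path_image g \<inter> inside G \<noteq> {}"
  then obtain t where t: "t \<in> {0..1}" "g t \<in> inside G" unfolding path_image_def by blast
  have "t \<noteq> 0" using t assms(3) inside_no_overlap unfolding pathstart_def by blast
  with t have "0 < t" "t \<le> 1" by auto
  with arc_tail[OF assms(1,2)] t assms(4) show False by blast
qed

lemma arc_disj_inside:
  fixes g :: "real \<Rightarrow> complex"
  assumes "arc g" "path_image g \<inter> G = {}" "pathstart g \<in> inside G"
  shows "pathfinish g \<in> inside G"
  using stay_inside[OF connected_path_image[OF arc_imp_path[OF assms(1)]] assms(2)]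
    assms(3) pathstart_in_path_image pathfinish_in_path_image by blast


lemma flip_inside:
  fixes G :: "complex set"
  assumes "compact G" "q \<in> inside G" "P \<notin> G" "P \<notin> inside G"
  shows "inverse (P - q) \<in> inside ((\<lambda>z. inverse (z - q)) ` G)"
proof (rule ccontr)
  define \<phi> where "\<phi> = (\<lambda>z::complex. inverse (z - q))"
  define \<psi> where "\<psi> = (\<lambda>w::complex. q + inverse w)"
  assume nin: "inverse (P - q) \<notin> inside (\<phi> ` G)"
  have qG: "q \<notin> G" using assms(2) inside_no_overlap by blast
  have Pq: "P \<noteq> q" using assms by blast
  have psiphi: "\<And>z. z \<noteq> q \<Longrightarrow> \<psi> (\<phi> z) = z" by (simp add: \<phi>_def \<psi>_def)
  have phipsi: "\<And>w. w \<noteq> 0 \<Longrightarrow> \<phi> (\<psi> w) = w" by (simp add: \<phi>_def \<psi>_def)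
  have notimg: "\<phi> z \<notin> \<phi> ` G" if "z \<notin> G" "z \<noteq> q" for z
  proof
    assume "\<phi> z \<in> \<phi> ` G"
    then obtain y where y: "y \<in> G" "\<phi> z = \<phi> y" by blast
    then have "y \<noteq> q" using qG by blast
    then have "z = y" using psiphi[of z] psiphi[of y] y that by metis
    with y that show False by blast
  qed
  have cG': "compact (\<phi> ` G)"
  proof (rule compact_continuous_image[OF _ assms(1)])
    show "continuous_on G \<phi>" unfolding \<phi>_def using qG
      by (intro continuous_intros) auto
  qed
  have PO: "\<phi> P \<in> outside (\<phi> ` G)"
    using nin notimg[OF assms(3) Pq] inside_Un_outside[of "\<phi> ` G"] unfolding \<phi>_def by blast
  obtain R where R: "R > 0" "inside (\<phi> ` G) \<subseteq> ball 0 R"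
    using bounded_inside[OF compact_imp_bounded[OF cG']] bounded_subset_ballD by blast
  have "open (inside G)" using open_inside compact_imp_closed assms(1) by blast
  then obtain e where e: "e > 0" "ball q e \<subseteq> inside G"
    using assms(2) open_contains_ball by blast
  define r where "r = min (e/2) (inverse R / 2)"
  have ir: "inverse R > 0" using R by simp
  have r: "r > 0" "r < e" "r < inverse R" using e ir by (auto simp: r_def min_def)
  define z where "z = q + of_real r"
  have zin: "z \<in> inside G" using e r by (auto simp: z_def dist_norm)
  have zq: "z \<noteq> q" using r by (auto simp: z_def)
  have zG: "z \<notin> G" using zin inside_no_overlap by blast
  have "norm (\<phi> z) = inverse r" using r by (simp add: \<phi>_def z_def norm_inverse)
  moreover have "inverse r > R" using r R
    by (metis inverse_inverse_eq inverse_less_iff_less inverse_positive_iff_positive)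
  ultimately have "\<phi> z \<notin> inside (\<phi> ` G)" using R by auto
  then have zO: "\<phi> z \<in> outside (\<phi> ` G)"
    using notimg[OF zG zq] inside_Un_outside[of "\<phi> ` G"] by blast
  define Om where "Om = outside (\<phi> ` G) - {0}"
  have conO: "connected Om" unfolding Om_def
    by (rule connected_open_delete)
       (auto intro: open_outside compact_imp_closed cG' connected_outside[OF compact_imp_bounded[OF cG']])
  have con: "connected (\<psi> ` Om)"
  proof (rule connected_continuous_image[OF _ conO])
    show "continuous_on Om \<psi>" unfolding \<psi>_def Om_def by (intro continuous_intros) auto
  qed
  have disj: "\<psi> ` Om \<inter> G = {}"
  proof (rule ccontr)
    assume "\<psi> ` Om \<inter> G \<noteq> {}"
    then obtain w where w: "w \<in> Om" "\<psi> w \<in> G" by blast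
    then have "\<phi> (\<psi> w) \<in> \<phi> ` G" by blast
    with w phipsi[of w] have "w \<in> \<phi> ` G" unfolding Om_def by auto
    with w show False unfolding Om_def using outside_no_overlap by blast
  qed
  have nz: "\<phi> z \<noteq> 0" "\<phi> P \<noteq> 0" using zq Pq by (auto simp: \<phi>_def)
  have "z \<in> \<psi> ` Om" using zO nz psiphi[OF zq] unfolding Om_def by force
  moreover have "P \<in> \<psi> ` Om" using PO nz psiphi[OF Pq] unfolding Om_def by force
  ultimately have "P \<in> inside G" using stay_inside[OF con disj] zin by blast
  with assms(4) show False by blast
qed


definition drawK5 :: "(nat \<Rightarrow> complex) \<Rightarrow> (nat \<Rightarrow> nat \<Rightarrow> real \<Rightarrow> complex) \<Rightarrow> bool" where
 "drawK5 p \<gamma> \<longleftrightarrow> inj_on p {..<5} \<and>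
   (\<forall>i j. i<5 \<longrightarrow> j<5 \<longrightarrow> i\<noteq>j \<longrightarrow> arc (\<gamma> i j) \<and> pathstart (\<gamma> i j) = p i \<and> pathfinish (\<gamma> i j) = p j
       \<and> path_image (\<gamma> j i) = path_image (\<gamma> i j) \<and> path_image (\<gamma> i j) \<inter> p ` {..<5} = {p i, p j}) \<and>
   (\<forall>i j k l. i<5 \<longrightarrow> j<5 \<longrightarrow> k<5 \<longrightarrow> l<5 \<longrightarrow> i\<noteq>j \<longrightarrow> k\<noteq>l \<longrightarrow> {i,j} \<noteq> {k,l} \<longrightarrow>
       path_image (\<gamma> i j) \<inter> path_image (\<gamma> k l) = p ` ({i,j} \<inter> {k,l}))"

context
  fixes p :: "nat \<Rightarrow> complex" and \<gamma> :: "nat \<Rightarrow> nat \<Rightarrow> real \<Rightarrow> complex"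
  assumes D: "drawK5 p \<gamma>"
begin

lemma D1: "inj_on p {..<5}" using D unfolding drawK5_def by (elim conjE)
lemma D2: "\<forall>i j. i<5 \<longrightarrow> j<5 \<longrightarrow> i\<noteq>j \<longrightarrow> arc (\<gamma> i j) \<and> pathstart (\<gamma> i j) = p i \<and> pathfinish (\<gamma> i j) = p j
       \<and> path_image (\<gamma> j i) = path_image (\<gamma> i j) \<and> path_image (\<gamma> i j) \<inter> p ` {..<5} = {p i, p j}"
  using D unfolding drawK5_def by (elim conjE)
lemma D3: "\<forall>i j k l. i<5 \<longrightarrow> j<5 \<longrightarrow> k<5 \<longrightarrow> l<5 \<longrightarrow> i\<noteq>j \<longrightarrow> k\<noteq>l \<longrightarrow> {i,j} \<noteq> {k,l} \<longrightarrow>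
       path_image (\<gamma> i j) \<inter> path_image (\<gamma> k l) = p ` ({i,j} \<inter> {k,l})"
  using D unfolding drawK5_def by (elim conjE)

lemma dK_arc: "i<5 \<Longrightarrow> j<5 \<Longrightarrow> i\<noteq>j \<Longrightarrow> arc (\<gamma> i j)"
  using D2 by blast
lemma dK_start: "i<5 \<Longrightarrow> j<5 \<Longrightarrow> i\<noteq>j \<Longrightarrow> pathstart (\<gamma> i j) = p i"
  using D2 by blast
lemma dK_fin: "i<5 \<Longrightarrow> j<5 \<Longrightarrow> i\<noteq>j \<Longrightarrow> pathfinish (\<gamma> i j) = p j"
  using D2 by blast
lemma dK_sym: "i<5 \<Longrightarrow> j<5 \<Longrightarrow> i\<noteq>j \<Longrightarrow> path_image (\<gamma> j i) = path_image (\<gamma> i j)"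
  using D2 by blast
lemma dK_inj: "i<5 \<Longrightarrow> j<5 \<Longrightarrow> p i = p j \<longleftrightarrow> i = j"
  using D1 unfolding inj_on_def by (metis lessThan_iff)
lemma dK_vert: "i<5 \<Longrightarrow> j<5 \<Longrightarrow> i\<noteq>j \<Longrightarrow> k<5 \<Longrightarrow> p k \<in> path_image (\<gamma> i j) \<longleftrightarrow> k = i \<or> k = j"
proof -
  assume a: "i<5" "j<5" "i\<noteq>j" "k<5"
  then have e: "path_image (\<gamma> i j) \<inter> p ` {..<5} = {p i, p j}" using D2 by blast
  have "p k \<in> p ` {..<5}" using a by simp
  then have "p k \<in> path_image (\<gamma> i j) \<longleftrightarrow> p k \<in> {p i, p j}" using e by blast
  then show ?thesis using a dK_inj by auto
qed
lemma dK_disj: "i<5 \<Longrightarrow> j<5 \<Longrightarrow> k<5 \<Longrightarrow> l<5 \<Longrightarrow> distinct [i,j,k,l] \<Longrightarrow>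
   path_image (\<gamma> i j) \<inter> path_image (\<gamma> k l) = {}"
proof -
  assume a: "i<5" "j<5" "k<5" "l<5" "distinct [i,j,k,l]"
  then have "path_image (\<gamma> i j) \<inter> path_image (\<gamma> k l) = p ` ({i,j} \<inter> {k,l})"
    using D3 by (simp add: doubleton_eq_iff)
  then show ?thesis using a by auto
qed
lemma dK_share: "i<5 \<Longrightarrow> j<5 \<Longrightarrow> k<5 \<Longrightarrow> distinct [i,j,k] \<Longrightarrow>
   path_image (\<gamma> i j) \<inter> path_image (\<gamma> i k) = {p i}"
proof -
  assume a: "i<5" "j<5" "k<5" "distinct [i,j,k]"
  then have "path_image (\<gamma> i j) \<inter> path_image (\<gamma> i k) = p ` ({i,j} \<inter> {i,k})"
    using D3 by (simp add: doubleton_eq_iff)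
  then show ?thesis using a by auto
qed

end


lemma arc2:
  assumes D: "drawK5 p \<gamma>" and "i<5" "j<5" "k<5" "distinct [i,j,k]"
  shows "arc (\<gamma> i j +++ \<gamma> j k)" "pathstart (\<gamma> i j +++ \<gamma> j k) = p i"
    "pathfinish (\<gamma> i j +++ \<gamma> j k) = p k"
    "path_image (\<gamma> i j +++ \<gamma> j k) = path_image (\<gamma> i j) \<union> path_image (\<gamma> j k)"
proof -
  have "path_image (\<gamma> i j) \<inter> path_image (\<gamma> j k) = {p j}"
    using dK_sym[OF D, of i j] dK_share[OF D, of j i k] assms by auto
  then show "arc (\<gamma> i j +++ \<gamma> j k)"
    using assms dK_arc[OF D] dK_start[OF D] dK_fin[OF D] by (subst arc_join_eq) auto
  show "pathstart (\<gamma> i j +++ \<gamma> j k) = p i" "pathfinish (\<gamma> i j +++ \<gamma> j k) = p k"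
    using assms dK_start[OF D] dK_fin[OF D] by auto
  show "path_image (\<gamma> i j +++ \<gamma> j k) = path_image (\<gamma> i j) \<union> path_image (\<gamma> j k)"
    using assms dK_start[OF D] dK_fin[OF D] by (subst path_image_join) auto
qed

lemma dK_adj: assumes D: "drawK5 p \<gamma>" and "i<5" "j<5" "k<5" "distinct [i,j,k]"
  shows "path_image (\<gamma> i j) \<inter> path_image (\<gamma> j k) = {p j}"
  using dK_sym[OF D, of i j] dK_share[OF D, of j i k] assms by auto

lemma caseIn:
  assumes D: "drawK5 p \<gamma>" and idx: "a<5" "b<5" "c<5" "d<5" "e<5" and dist: "distinct [a,b,c,d,e]"
    and ins: "p d \<in> inside (path_image (\<gamma> a b) \<union> path_image (\<gamma> b c) \<union> path_image (\<gamma> c a))"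
  shows False
proof -
  define G where "G i j = path_image (\<gamma> i j)" for i j
  define T where "T = G a b \<union> G b c \<union> G c a"
  note dv = dK_vert[OF D, folded G_def]
  note dsj = dK_disj[OF D, folded G_def]
  note adj = dK_adj[OF D, folded G_def]
  note shr = dK_share[OF D, folded G_def]
  note sym = dK_sym[OF D, folded G_def]
  have ne: "a\<noteq>b" "a\<noteq>c" "a\<noteq>d" "a\<noteq>e" "b\<noteq>c" "b\<noteq>d" "b\<noteq>e" "c\<noteq>d" "c\<noteq>e" "d\<noteq>e"
    using dist by auto
  have inT: "p d \<in> inside T" using ins unfolding T_def G_def .
  have pT: "p a \<in> T" "p b \<in> T" "p c \<in> T" using dv idx ne unfolding T_def by auto
  have "G d e \<inter> T = {}" unfolding T_def using dsj[of d e a b] dsj[of d e b c] dsj[of d e c a] idx dist by auto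
  then have eT: "p e \<in> inside T"
    using arc_disj_inside[OF dK_arc[OF D, of d e]] dK_start[OF D, of d e] dK_fin[OF D, of d e]
      idx ne inT unfolding G_def by auto
  have s1: "G a b \<inter> (G a c \<union> G c b) = {p a, p b}"
    using shr[of a b c] adj[of a b c] sym[of b c] dv idx ne dist by auto
  have s2: "G a b \<inter> (G a d \<union> G d b) = {p a, p b}"
    using shr[of a b d] adj[of a b d] sym[of b d] dv idx ne dist by auto
  have s3: "(G a c \<union> G c b) \<inter> (G a d \<union> G d b) = {p a, p b}"
    using shr[of a c d] dsj[of a c d b] dsj[of c b a d] sym[of b c] sym[of b d] shr[of b c d] dv idx ne dist
    by auto
  have Teq: "G a b \<union> (G a c \<union> G c b) = T" unfolding T_def using sym[of a c] sym[of b c] idx ne by auto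
  have pdc: "p d \<in> G a d \<union> G d b" using dv idx ne by auto
  obtain I1: "inside (G a b \<union> (G a d \<union> G d b)) \<inter> inside ((G a c \<union> G c b) \<union> (G a d \<union> G d b)) = {}"
     and I2: "inside (G a b \<union> (G a d \<union> G d b)) \<union> inside ((G a c \<union> G c b) \<union> (G a d \<union> G d b)) \<union>
              ((G a d \<union> G d b) - {p a, p b}) = inside (G a b \<union> (G a c \<union> G c b))"
  proof (rule split_inside_simple_closed_curve[of "\<gamma> a b" "p a" "p b" "\<gamma> a c +++ \<gamma> c b" "\<gamma> a d +++ \<gamma> d b"])
    show "simple_path (\<gamma> a b)" using dK_arc[OF D] idx ne arc_imp_simple_path by blast
    show "simple_path (\<gamma> a c +++ \<gamma> c b)" using arc2[OF D, of a c b] idx dist arc_imp_simple_path by auto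
    show "simple_path (\<gamma> a d +++ \<gamma> d b)" using arc2[OF D, of a d b] idx dist arc_imp_simple_path by auto
    show "pathstart (\<gamma> a b) = p a" "pathfinish (\<gamma> a b) = p b" using dK_start[OF D] dK_fin[OF D] idx ne by auto
    show "pathstart (\<gamma> a c +++ \<gamma> c b) = p a" "pathfinish (\<gamma> a c +++ \<gamma> c b) = p b"
      "pathstart (\<gamma> a d +++ \<gamma> d b) = p a" "pathfinish (\<gamma> a d +++ \<gamma> d b) = p b"
      using arc2[OF D, of a c b] arc2[OF D, of a d b] idx dist by auto
    show "p a \<noteq> p b" using dK_inj[OF D] idx ne by auto
  qed (use arc2[OF D, of a c b] arc2[OF D, of a d b] idx dist s1 s2 s3 Teq inT pdc in \<open>auto simp: G_def\<close>)
  let ?I1 = "inside (G a b \<union> (G a d \<union> G d b))"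
  let ?I2 = "inside ((G a c \<union> G c b) \<union> (G a d \<union> G d b))"
  have I2': "?I1 \<union> ?I2 \<union> ((G a d \<union> G d b) - {p a, p b}) = inside T" using I2 Teq by simp
  have I1T: "?I1 \<subseteq> inside T" and I2T: "?I2 \<subseteq> inside T" using I2' by blast+
  have ped: "p e \<notin> G a d \<union> G d b" using dv idx ne by auto
  have noT: "\<And>v. v \<in> T \<Longrightarrow> v \<in> inside T \<Longrightarrow> False" using inside_no_overlap by blast
  have I1no: False if "p e \<in> ?I1"
  proof -
    have "G e c \<inter> (G a b \<union> (G a d \<union> G d b)) = {}"
      using dsj[of e c a b] dsj[of e c a d] dsj[of e c d b] idx dist by auto
    then have "p c \<in> ?I1"
      using arc_disj_inside[OF dK_arc[OF D, of e c]] dK_start[OF D, of e c] dK_fin[OF D, of e c]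
        idx ne that unfolding G_def by auto
    then show False using I1T pT noT by blast
  qed
  have "p e \<in> ?I1 \<union> ?I2 \<union> ((G a d \<union> G d b) - {p a, p b})" unfolding I2' by (rule eT)
  then have eI2: "p e \<in> ?I2" using I1no ped by blast
  define x where "x = \<gamma> c d (1/2)"
  have arccd: "arc (\<gamma> c d)" using dK_arc[OF D] idx ne by auto
  have injcd: "inj_on (\<gamma> c d) {0..1}" using arccd arc_def by blast
  have xG: "x \<in> G c d" unfolding x_def G_def path_image_def by auto
  have xpd: "x \<noteq> p d"
  proof
    assume "x = p d"
    then have "\<gamma> c d (1/2) = \<gamma> c d 1" using dK_fin[OF D, of c d] idx ne unfolding x_def pathfinish_def by auto
    then have "(1/2::real) = 1" by (rule inj_onD[OF injcd]) auto
    then show False by simp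
  qed
  have "G c d \<inter> T \<subseteq> {p c}" unfolding T_def
    using dsj[of c d a b] adj[of b c d] shr[of c d a] idx dist by auto
  then have xT: "x \<in> inside T"
    using arc_tail[OF arccd, of T "1/2"] dK_start[OF D, of c d] dK_fin[OF D, of c d] idx ne inT
    unfolding x_def G_def by auto
  have xn: "x \<notin> G a d \<union> G d b"
    using xG xpd adj[of a d c] sym[of c d] adj[of c d b] idx dist by auto
  have xI2: "x \<in> ?I2"
  proof (rule ccontr)
    assume "x \<notin> ?I2"
    moreover have "x \<in> ?I1 \<union> ?I2 \<union> ((G a d \<union> G d b) - {p a, p b})" unfolding I2' by (rule xT)
    ultimately have xI1: "x \<in> ?I1" using xn by blast
    have arcr: "arc (reversepath (\<gamma> c d))" using arccd by (simp add: arc_reversepath)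
    have "G c d \<inter> (G a b \<union> (G a d \<union> G d b)) \<subseteq> {p d}"
      using dsj[of c d a b] adj[of a d c] sym[of c d] adj[of c d b] idx dist by auto
    then have "path_image (reversepath (\<gamma> c d)) \<inter> (G a b \<union> (G a d \<union> G d b)) \<subseteq> {pathstart (reversepath (\<gamma> c d))}"
      using dK_fin[OF D, of c d] idx ne unfolding G_def by simp
    from arc_tail[OF arcr this, of "1/2"] xI1
    have "pathfinish (reversepath (\<gamma> c d)) \<in> ?I1" unfolding x_def reversepath_def by (simp add: G_def)
    then have "p c \<in> ?I1" using dK_start[OF D, of c d] idx ne by simp
    then show False using I1T pT noT by blast
  qed
  have Q2eq: "(G c a \<union> G a d) \<union> (G c b \<union> G b d) = (G a c \<union> G c b) \<union> (G a d \<union> G d b)"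
    using sym[of a c] sym[of b d] idx ne by auto
  have t1: "(G c a \<union> G a d) \<inter> (G c b \<union> G b d) = {p c, p d}"
    using shr[of c a b] dsj[of c a b d] dsj[of a d c b] sym[of b d] adj[of a d b] dv idx ne dist by auto
  have t2: "(G c a \<union> G a d) \<inter> G c d = {p c, p d}"
    using shr[of c a d] adj[of a d c] sym[of c d] dv idx ne dist by auto
  have t3: "(G c b \<union> G b d) \<inter> G c d = {p c, p d}"
    using shr[of c b d] adj[of b d c] sym[of c d] dv idx ne dist by auto
  obtain J2: "inside ((G c a \<union> G a d) \<union> G c d) \<union> inside ((G c b \<union> G b d) \<union> G c d) \<union>
              (G c d - {p c, p d}) = inside ((G c a \<union> G a d) \<union> (G c b \<union> G b d))"
  proof (rule split_inside_simple_closed_curve[of "\<gamma> c a +++ \<gamma> a d" "p c" "p d" "\<gamma> c b +++ \<gamma> b d" "\<gamma> c d"])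
    show "simple_path (\<gamma> c d)" using arccd arc_imp_simple_path by blast
    show "simple_path (\<gamma> c a +++ \<gamma> a d)" using arc2[OF D, of c a d] idx dist arc_imp_simple_path by auto
    show "simple_path (\<gamma> c b +++ \<gamma> b d)" using arc2[OF D, of c b d] idx dist arc_imp_simple_path by auto
    show "pathstart (\<gamma> c d) = p c" "pathfinish (\<gamma> c d) = p d" using dK_start[OF D] dK_fin[OF D] idx ne by auto
    show "pathstart (\<gamma> c a +++ \<gamma> a d) = p c" "pathfinish (\<gamma> c a +++ \<gamma> a d) = p d"
      "pathstart (\<gamma> c b +++ \<gamma> b d) = p c" "pathfinish (\<gamma> c b +++ \<gamma> b d) = p d"
      using arc2[OF D, of c a d] arc2[OF D, of c b d] idx dist by auto
    show "p c \<noteq> p d" using dK_inj[OF D] idx ne by auto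
      have im1: "path_image (\<gamma> c a +++ \<gamma> a d) = G c a \<union> G a d"
      using arc2(4)[OF D, of c a d] idx dist unfolding G_def by auto
    have im2: "path_image (\<gamma> c b +++ \<gamma> b d) = G c b \<union> G b d"
      using arc2(4)[OF D, of c b d] idx dist unfolding G_def by auto
    have im3: "path_image (\<gamma> c d) = G c d" unfolding G_def ..
    show "path_image (\<gamma> c a +++ \<gamma> a d) \<inter> path_image (\<gamma> c b +++ \<gamma> b d) = {p c, p d}"
      unfolding im1 im2 by (rule t1)
    show "path_image (\<gamma> c a +++ \<gamma> a d) \<inter> path_image (\<gamma> c d) = {p c, p d}"
      unfolding im1 im3 by (rule t2)
    show "path_image (\<gamma> c b +++ \<gamma> b d) \<inter> path_image (\<gamma> c d) = {p c, p d}"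
      unfolding im2 im3 by (rule t3)
    show "path_image (\<gamma> c d) \<inter> inside (path_image (\<gamma> c a +++ \<gamma> a d) \<union> path_image (\<gamma> c b +++ \<gamma> b d)) \<noteq> {}"
      unfolding im1 im2 im3 Q2eq using xG xI2 by blast
    assume _: "inside (path_image (\<gamma> c a +++ \<gamma> a d) \<union> path_image (\<gamma> c d)) \<inter>
        inside (path_image (\<gamma> c b +++ \<gamma> b d) \<union> path_image (\<gamma> c d)) = {}"
      and "inside (path_image (\<gamma> c a +++ \<gamma> a d) \<union> path_image (\<gamma> c d)) \<union>
        inside (path_image (\<gamma> c b +++ \<gamma> b d) \<union> path_image (\<gamma> c d)) \<union>
        (path_image (\<gamma> c d) - {p c, p d}) = inside (path_image (\<gamma> c a +++ \<gamma> a d) \<union> path_image (\<gamma> c b +++ \<gamma> b d))"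
    then show ?thesis using that unfolding im1 im2 im3 by blast
  qed
  let ?J1 = "inside ((G c a \<union> G a d) \<union> G c d)"
  let ?J2 = "inside ((G c b \<union> G b d) \<union> G c d)"
  have J2': "?J1 \<union> ?J2 \<union> (G c d - {p c, p d}) = ?I2" using J2 Q2eq by simp
  have J1T: "?J1 \<subseteq> inside T" and J2T: "?J2 \<subseteq> inside T" using J2' I2T by blast+
  have pec: "p e \<notin> G c d" using dv idx ne by auto
  have J1no: False if "p e \<in> ?J1"
  proof -
    have "G e b \<inter> ((G c a \<union> G a d) \<union> G c d) = {}"
      using dsj[of e b c a] dsj[of e b a d] dsj[of e b c d] idx dist by auto
    then have "p b \<in> ?J1"
      using arc_disj_inside[OF dK_arc[OF D, of e b]] dK_start[OF D, of e b] dK_fin[OF D, of e b]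
        idx ne that unfolding G_def by auto
    then show False using J1T pT noT by blast
  qed
  have J2no: False if "p e \<in> ?J2"
  proof -
    have "G e a \<inter> ((G c b \<union> G b d) \<union> G c d) = {}"
      using dsj[of e a c b] dsj[of e a b d] dsj[of e a c d] idx dist by auto
    then have "p a \<in> ?J2"
      using arc_disj_inside[OF dK_arc[OF D, of e a]] dK_start[OF D, of e a] dK_fin[OF D, of e a]
        idx ne that unfolding G_def by auto
    then show False using J2T pT noT by blast
  qed
  have "p e \<in> ?J1 \<union> ?J2 \<union> (G c d - {p c, p d})" unfolding J2' by (rule eI2)
  then show False using J1no J2no pec by blast
qed


lemma drawK5_inv:
  assumes D: "drawK5 p \<gamma>" and Q: "\<And>i j. i<5 \<Longrightarrow> j<5 \<Longrightarrow> i\<noteq>j \<Longrightarrow> q \<notin> path_image (\<gamma> i j)"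
  shows "drawK5 (\<lambda>i. inverse (p i - q)) (\<lambda>i j. (\<lambda>z. inverse (z - q)) \<circ> \<gamma> i j)"
proof -
  define \<phi> where "\<phi> = (\<lambda>z::complex. inverse (z - q))"
  have injphi: "inj_on \<phi> (- {q})" by (auto simp: inj_on_def \<phi>_def)
  have contphi: "continuous_on (- {q}) \<phi>" unfolding \<phi>_def by (intro continuous_intros) auto
  have pq: "p i \<noteq> q" if "i<5" for i
  proof -
    define j where "j = (if i = 0 then 1 else (0::nat))"
    have j: "j<5" "i\<noteq>j" by (auto simp: j_def)
    have "p i \<in> path_image (\<gamma> i j)" using dK_start[OF D, of i j] that j pathstart_in_path_image by metis
    then show ?thesis using Q[OF that j(1,2)] by auto
  qed
  have Gq: "path_image (\<gamma> i j) \<subseteq> - {q}" if "i<5" "j<5" "i\<noteq>j" for i j using Q[OF that] by auto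
  have Pq: "p ` {..<5} \<subseteq> - {q}" using pq by auto
  have imgc: "path_image (\<phi> \<circ> \<gamma> i j) = \<phi> ` path_image (\<gamma> i j)" for i j by (rule path_image_compose)
  have p5: "(\<lambda>i. \<phi> (p i)) ` {..<5} = \<phi> ` (p ` {..<5})" by auto
  have c1: "inj_on (\<lambda>i. \<phi> (p i)) {..<5}"
    using comp_inj_on[OF D1[OF D] inj_on_subset[OF injphi Pq]] by (simp add: o_def)
  have c2: "arc (\<phi> \<circ> \<gamma> i j) \<and> pathstart (\<phi> \<circ> \<gamma> i j) = \<phi> (p i) \<and> pathfinish (\<phi> \<circ> \<gamma> i j) = \<phi> (p j)
       \<and> path_image (\<phi> \<circ> \<gamma> j i) = path_image (\<phi> \<circ> \<gamma> i j)
       \<and> path_image (\<phi> \<circ> \<gamma> i j) \<inter> (\<lambda>i. \<phi> (p i)) ` {..<5} = {\<phi> (p i), \<phi> (p j)}"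
    if ij: "i<5" "j<5" "i\<noteq>j" for i j
  proof (intro conjI)
    have a: "arc (\<gamma> i j)" using dK_arc[OF D ij] .
    show "arc (\<phi> \<circ> \<gamma> i j)" unfolding arc_def
    proof
      show "path (\<phi> \<circ> \<gamma> i j)"
        using path_continuous_image[OF arc_imp_path[OF a] continuous_on_subset[OF contphi Gq[OF ij]]] .
      have "inj_on (\<gamma> i j) {0..1}" using a arc_def by blast
      moreover have "\<gamma> i j ` {0..1} \<subseteq> - {q}" using Gq[OF ij] unfolding path_image_def .
      ultimately show "inj_on (\<phi> \<circ> \<gamma> i j) {0..1}"
        using comp_inj_on inj_on_subset[OF injphi] by blast
    qed
    show "pathstart (\<phi> \<circ> \<gamma> i j) = \<phi> (p i)" "pathfinish (\<phi> \<circ> \<gamma> i j) = \<phi> (p j)"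
      using dK_start[OF D ij] dK_fin[OF D ij] by (simp_all add: pathstart_compose pathfinish_compose)
    show "path_image (\<phi> \<circ> \<gamma> j i) = path_image (\<phi> \<circ> \<gamma> i j)"
      using dK_sym[OF D ij] by (simp add: imgc)
    have "path_image (\<gamma> i j) \<inter> p ` {..<5} = {p i, p j}" using D2[OF D] ij by blast
    then have "\<phi> ` (path_image (\<gamma> i j) \<inter> p ` {..<5}) = {\<phi> (p i), \<phi> (p j)}" by simp
    then show "path_image (\<phi> \<circ> \<gamma> i j) \<inter> (\<lambda>i. \<phi> (p i)) ` {..<5} = {\<phi> (p i), \<phi> (p j)}"
      unfolding imgc p5 using inj_on_image_Int[OF injphi Gq[OF ij] Pq] by simp
  qed
  have c3: "path_image (\<phi> \<circ> \<gamma> i j) \<inter> path_image (\<phi> \<circ> \<gamma> k l) = (\<lambda>i. \<phi> (p i)) ` ({i,j} \<inter> {k,l})"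
    if "i<5" "j<5" "k<5" "l<5" "i\<noteq>j" "k\<noteq>l" "{i,j} \<noteq> {k,l}" for i j k l
  proof -
    have "path_image (\<gamma> i j) \<inter> path_image (\<gamma> k l) = p ` ({i,j} \<inter> {k,l})"
      using D3[OF D] that by blast
    then show ?thesis unfolding imgc
      using inj_on_image_Int[OF injphi Gq[of i j] Gq[of k l]] that by (simp add: image_image)
  qed
  have "drawK5 (\<lambda>i. \<phi> (p i)) (\<lambda>i j. \<phi> \<circ> \<gamma> i j)" unfolding drawK5_def
    using c1 c2 c3 by blast
  then show ?thesis by (simp only: \<phi>_def)
qed


lemma pairs5: "(i::nat) < j \<Longrightarrow> j < 5 \<Longrightarrow> (i,j) \<in> {(0,1),(0,2),(0,3),(0,4),(1,2),(1,3),(1,4),(2,3),(2,4),(3,4)}"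
  by (auto simp: less_Suc_eq numeral_eq_Suc)

lemma touch:
  assumes D: "drawK5 p \<gamma>" and idx: "a<5" "b<5" "c<5" "m<5" "distinct [a,b,c,m]"
  shows "path_image (\<gamma> a m) \<inter> (path_image (\<gamma> a b) \<union> path_image (\<gamma> b c) \<union> path_image (\<gamma> c a)) \<subseteq> {p a}"
  using dK_share[OF D, of a m b] dK_disj[OF D, of a m b c] dK_sym[OF D, of a c] dK_share[OF D, of a m c] idx
  by auto

theorem K5_draw_False:
  assumes D: "drawK5 p \<gamma>"
  shows False
proof -
  define G where "G i j = path_image (\<gamma> i j)" for i j
  define T where "T = G 0 1 \<union> G 1 2 \<union> G 2 0"
  define c where "c = \<gamma> 0 1 +++ (\<gamma> 1 2 +++ \<gamma> 2 0)"
  have a12: "arc (\<gamma> 1 2 +++ \<gamma> 2 0)" "pathstart (\<gamma> 1 2 +++ \<gamma> 2 0) = p 1"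
     "pathfinish (\<gamma> 1 2 +++ \<gamma> 2 0) = p 0" "path_image (\<gamma> 1 2 +++ \<gamma> 2 0) = G 1 2 \<union> G 2 0"
    using arc2[OF D, of 1 2 0] unfolding G_def by auto
  have s01: "pathstart (\<gamma> 0 1) = p 0" "pathfinish (\<gamma> 0 1) = p 1" "arc (\<gamma> 0 1)"
    using dK_start[OF D, of 0 1] dK_fin[OF D, of 0 1] dK_arc[OF D, of 0 1] by auto
  have "G 0 1 \<inter> (G 1 2 \<union> G 2 0) \<subseteq> {p 0, p 1}"
    using dK_adj[OF D, of 0 1 2] dK_sym[OF D, of 0 2] dK_share[OF D, of 0 1 2] unfolding G_def by auto
  then have sc: "simple_path c" unfolding c_def using a12 s01
    by (subst simple_path_join_loop_eq) (auto simp: G_def)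
  have pc: "path_image c = T" unfolding c_def T_def using a12 s01
    by (simp add: path_image_join G_def Un_assoc)
  have lc: "pathfinish c = pathstart c" unfolding c_def using a12 s01 by simp
  have "inside T \<noteq> {}" using Jordan_inside_outside[OF sc lc] pc by simp
  then obtain q where q: "q \<in> inside T" by blast
  have n3: "p 3 \<notin> inside T"
  proof
    assume "p 3 \<in> inside T"
    then show False using caseIn[OF D, of 0 1 2 3 4] unfolding T_def G_def by simp
  qed
  have n4: "p 4 \<notin> inside T"
  proof
    assume "p 4 \<in> inside T"
    then show False using caseIn[OF D, of 0 1 2 4 3] unfolding T_def G_def by simp
  qed
  have pT: "p 0 \<in> T" "p 1 \<in> T" "p 2 \<in> T"
    using dK_vert[OF D, of 0 1] dK_vert[OF D, of 1 2] unfolding T_def G_def by auto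
  have p34: "p 3 \<notin> T" "p 4 \<notin> T"
    using dK_vert[OF D, of 0 1] dK_vert[OF D, of 1 2] dK_vert[OF D, of 2 0] unfolding T_def G_def by auto
  have noT: "\<And>v. v \<in> T \<Longrightarrow> v \<in> inside T \<Longrightarrow> False" using inside_no_overlap by blast
  have inT: "q \<notin> G 0 1" "q \<notin> G 1 2" "q \<notin> G 0 2"
    using q noT dK_sym[OF D, of 0 2] unfolding T_def G_def by auto
  have "G 3 4 \<inter> T = {}"
    using dK_disj[OF D, of 3 4 0 1] dK_disj[OF D, of 3 4 1 2] dK_disj[OF D, of 3 4 2 0]
    unfolding T_def G_def by auto
  then have q34: "q \<notin> G 3 4"
    using stay_inside[of "G 3 4" T q] connected_path_image[OF arc_imp_path[OF dK_arc[OF D, of 3 4]]]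
      dK_vert[OF D, of 3 4 3] n3 q unfolding G_def by auto
  have av: "q \<notin> G a m" if "a < 3" "m = 3 \<or> m = 4" for a m
  proof -
    have idx: "a<5" "m<5" "a\<noteq>m" using that by auto
    have a3: "a = 0 \<or> a = 1 \<or> a = 2" using that by auto
    have T': "T = G 0 1 \<union> G 1 2 \<union> G 2 0" "T = G 1 2 \<union> G 2 0 \<union> G 0 1" "T = G 2 0 \<union> G 0 1 \<union> G 1 2"
      unfolding T_def by auto
    have "G a m \<inter> T \<subseteq> {p a}"
    proof -
      have "a = 0 \<or> a = 1 \<or> a = 2" using that by auto
      then show ?thesis
        using touch[OF D, of 0 1 2 m] touch[OF D, of 1 2 0 m] touch[OF D, of 2 0 1 m] that T'
        unfolding G_def by auto
    qed
    moreover have "pathstart (\<gamma> a m) \<in> T" using dK_start[OF D idx] pT a3 by auto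
    moreover have "pathfinish (\<gamma> a m) \<notin> inside T" using dK_fin[OF D idx] n3 n4 that by auto
    ultimately have "G a m \<inter> inside T = {}"
      using arc_avoid[OF dK_arc[OF D idx], of T] dK_start[OF D idx] unfolding G_def by auto
    then show ?thesis using q by blast
  qed
  have Q: "q \<notin> path_image (\<gamma> i j)" if "i<5" "j<5" "i\<noteq>j" for i j
  proof -
    have lt: "q \<notin> G i j" if "i < j" "j < 5" for i j
      using pairs5[OF that] inT q34 av[of 0 3] av[of 0 4] av[of 1 3] av[of 1 4] av[of 2 3] av[of 2 4]
      by auto
    show ?thesis
    proof (cases "i < j")
      case True then show ?thesis using lt that unfolding G_def by auto
    next
      case False then have "j < i" using that by auto
      then show ?thesis using lt[of j i] that dK_sym[OF D, of j i] unfolding G_def by auto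
    qed
  qed
  define \<phi> where "\<phi> = (\<lambda>z::complex. inverse (z - q))"
  have D': "drawK5 (\<lambda>i. inverse (p i - q)) (\<lambda>i j. \<phi> \<circ> \<gamma> i j)"
    using drawK5_inv[OF D Q] unfolding \<phi>_def by simp
  have cT: "compact T" unfolding T_def G_def
    using dK_arc[OF D, of 0 1] dK_arc[OF D, of 1 2] dK_arc[OF D, of 2 0]
    by (intro compact_Un compact_path_image arc_imp_path) auto
  have "inverse (p 3 - q) \<in> inside (\<phi> ` T)"
    using flip_inside[OF cT q p34(1) n3] unfolding \<phi>_def .
  moreover have "\<phi> ` T = path_image (\<phi> \<circ> \<gamma> 0 1) \<union> path_image (\<phi> \<circ> \<gamma> 1 2) \<union> path_image (\<phi> \<circ> \<gamma> 2 0)"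
    unfolding T_def G_def path_image_compose by auto
  ultimately show False using caseIn[OF D', of 0 1 2 3 4] by simp
qed


lemma int_restrict: "A \<inter> B = S \<Longrightarrow> C \<subseteq> B \<Longrightarrow> S \<subseteq> C \<Longrightarrow> A \<inter> C = S" by blast

lemma planar_no_K5:
  assumes P: "planar V E" and xs: "distinct xs" "length xs = 5" "set xs \<subseteq> V"
    and adj: "\<And>u v. u \<in> set xs \<Longrightarrow> v \<in> set xs \<Longrightarrow> u \<noteq> v \<Longrightarrow> {u, v} \<in> E"
  shows False
proof -
  obtain f :: "'a \<Rightarrow> complex" and g :: "'a set \<Rightarrow> real \<Rightarrow> complex" where
    F: "inj_on f V \<and>
      (\<forall>e\<in>E. arc (g e) \<and> {pathstart (g e), pathfinish (g e)} = f ` e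
              \<and> path_image (g e) \<inter> f ` V = f ` e) \<and>
      (\<forall>e\<in>E. \<forall>e'\<in>E. e \<noteq> e' \<longrightarrow> path_image (g e) \<inter> path_image (g e') = f ` (e \<inter> e'))"
    using P unfolding planar_def by blast
  have finj: "inj_on f V" using F by (elim conjE)
  have garc: "arc (g e) \<and> {pathstart (g e), pathfinish (g e)} = f ` e
              \<and> path_image (g e) \<inter> f ` V = f ` e" if "e \<in> E" for e using F that by (elim conjE) (erule bspec)
  have gdisj: "path_image (g e) \<inter> path_image (g e') = f ` (e \<inter> e')" if "e \<in> E" "e' \<in> E" "e \<noteq> e'" for e e'
  proof -
    have "\<forall>e\<in>E. \<forall>e'\<in>E. e \<noteq> e' \<longrightarrow> path_image (g e) \<inter> path_image (g e') = f ` (e \<inter> e')"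
      using F by (elim conjE)
    then show ?thesis using that by blast
  qed
  define x where "x i = xs ! i" for i
  define p where "p i = f (x i)" for i
  define e where "e i j = {x i, x j}" for i j
  define \<gamma> where "\<gamma> i j = (if pathstart (g (e i j)) = p i then g (e i j) else reversepath (g (e i j)))" for i j
  have xV: "x i \<in> V" if "i < 5" for i using xs that unfolding x_def by (metis nth_mem subsetD)
  have xinj: "x i = x j \<longleftrightarrow> i = j" if "i<5" "j<5" for i j
    using xs that unfolding x_def by (simp add: nth_eq_iff_index_eq)
  have pinj: "p i = p j \<longleftrightarrow> i = j" if "i<5" "j<5" for i j
    using xinj[OF that] finj xV[OF that(1)] xV[OF that(2)] unfolding p_def inj_on_def by blast
  have eE: "e i j \<in> E" if "i<5" "j<5" "i\<noteq>j" for i j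
  proof -
    have "x i \<in> set xs" "x j \<in> set xs" using that xs(2) unfolding x_def by simp_all
    moreover have "x i \<noteq> x j" using xinj[OF that(1,2)] that(3) by simp
    ultimately show ?thesis using adj unfolding e_def by blast
  qed
  have fe: "f ` e i j = {p i, p j}" for i j unfolding e_def p_def by auto
  have c2: "arc (\<gamma> i j) \<and> pathstart (\<gamma> i j) = p i \<and> pathfinish (\<gamma> i j) = p j
       \<and> path_image (\<gamma> j i) = path_image (\<gamma> i j) \<and> path_image (\<gamma> i j) \<inter> p ` {..<5} = {p i, p j}"
    if ij: "i<5" "j<5" "i\<noteq>j" for i j
  proof -
    have G: "arc (g (e i j))" "{pathstart (g (e i j)), pathfinish (g (e i j))} = {p i, p j}"
       "path_image (g (e i j)) \<inter> f ` V = {p i, p j}"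
      using garc[OF eE[OF ij]] unfolding fe by simp_all
    have pij: "p i \<noteq> p j" using pinj[OF ij(1,2)] ij(3) by simp
    have img: "path_image (\<gamma> i j) = path_image (g (e i j))" unfolding \<gamma>_def by simp
    have eji: "e j i = e i j" unfolding e_def by auto
    have imgs: "path_image (\<gamma> j i) = path_image (g (e i j))" unfolding \<gamma>_def eji by simp
    have se: "pathstart (\<gamma> i j) = p i \<and> pathfinish (\<gamma> i j) = p j"
    proof (cases "pathstart (g (e i j)) = p i")
      case True
      then have "pathfinish (g (e i j)) = p j" using G(2) pij by (auto simp: doubleton_eq_iff)
      then show ?thesis using True unfolding \<gamma>_def by simp
    next
      case False
      then have "pathstart (g (e i j)) = p j" "pathfinish (g (e i j)) = p i" using G(2) pij
        by (auto simp: doubleton_eq_iff)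
      then show ?thesis using False unfolding \<gamma>_def by simp
    qed
    have pV: "p ` {..<5} \<subseteq> f ` V" using xV unfolding p_def by auto
    have "{p i, p j} \<subseteq> p ` {..<5}" using ij by auto
    then have "path_image (\<gamma> i j) \<inter> p ` {..<5} = {p i, p j}"
      unfolding img by (rule int_restrict[OF G(3) pV])
    moreover have "arc (\<gamma> i j)" unfolding \<gamma>_def using G(1) by (simp add: arc_reversepath)
    ultimately show ?thesis using se img imgs by simp
  qed
  have c3: "path_image (\<gamma> i j) \<inter> path_image (\<gamma> k l) = p ` ({i,j} \<inter> {k,l})"
    if "i<5" "j<5" "k<5" "l<5" "i\<noteq>j" "k\<noteq>l" "{i,j} \<noteq> {k,l}" for i j k l
  proof -
    have img: "path_image (\<gamma> a b) = path_image (g (e a b))" for a b unfolding \<gamma>_def by simp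
    have ne: "e i j \<noteq> e k l" using that xinj unfolding e_def by (auto simp: doubleton_eq_iff)
    have "e i j \<inter> e k l = x ` ({i,j} \<inter> {k,l})" using that xinj unfolding e_def by auto
    then show ?thesis using gdisj[OF eE[of i j] eE[of k l] ne] that img unfolding p_def by (simp add: image_image)
  qed
  have "drawK5 p \<gamma>" unfolding drawK5_def
  proof (intro conjI)
    show "inj_on p {..<5}" using pinj by (auto simp: inj_on_def)
  next
    show "\<forall>i j. i<5 \<longrightarrow> j<5 \<longrightarrow> i\<noteq>j \<longrightarrow> arc (\<gamma> i j) \<and> pathstart (\<gamma> i j) = p i \<and> pathfinish (\<gamma> i j) = p j
       \<and> path_image (\<gamma> j i) = path_image (\<gamma> i j) \<and> path_image (\<gamma> i j) \<inter> p ` {..<5} = {p i, p j}"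
      using c2 by blast
  next
    show "\<forall>i j k l. i<5 \<longrightarrow> j<5 \<longrightarrow> k<5 \<longrightarrow> l<5 \<longrightarrow> i\<noteq>j \<longrightarrow> k\<noteq>l \<longrightarrow> {i,j} \<noteq> {k,l} \<longrightarrow>
       path_image (\<gamma> i j) \<inter> path_image (\<gamma> k l) = p ` ({i,j} \<inter> {k,l})"
      using c3 by blast
  qed
  then show False by (rule K5_draw_False)
qed



lemma cyc_img: "cycle_edges vs = (\<lambda>i. {vs!i, vs!((i+1) mod length vs)}) ` {..<length vs}"
  unfolding cycle_edges_def by auto

lemma u3: "{..<3::nat} = {0,1,2}" by auto
lemma u4: "{..<4::nat} = {0,1,2,3}" by auto
lemma u5: "{..<5::nat} = {0,1,2,3,4}" by auto
lemma u6: "{..<6::nat} = {0,1,2,3,4,5}" by auto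

lemma ce3: "cycle_edges [a,b,c] = {{a,b},{b,c},{c,a}}"
proof -
  have l: "length [a,b,c] = 3" by simp
  show ?thesis unfolding cyc_img l u3 by simp
qed
lemma ce4: "cycle_edges [a,b,c,d] = {{a,b},{b,c},{c,d},{d,a}}"
proof -
  have l: "length [a,b,c,d] = 4" by simp
  show ?thesis unfolding cyc_img l u4 by simp
qed
lemma ce5: "cycle_edges [a,b,c,d,e] = {{a,b},{b,c},{c,d},{d,e},{e,a}}"
proof -
  have l: "length [a,b,c,d,e] = 5" by simp
  show ?thesis unfolding cyc_img l u5 by simp
qed
lemma ce6: "cycle_edges [a,b,c,d,e,f] = {{a,b},{b,c},{c,d},{d,e},{e,f},{f,a}}"
proof -
  have l: "length [a,b,c,d,e,f] = 6" by simp
  show ?thesis unfolding cyc_img l u6 by simp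
qed

lemma len3: "length vs = 3 \<Longrightarrow> \<exists>a b c. vs = [a,b,c]"
  by (auto simp: length_Suc_conv numeral_eq_Suc)
lemma len5: "length vs = 5 \<Longrightarrow> \<exists>a b c d e. vs = [a,b,c,d,e]"
  by (auto simp: length_Suc_conv numeral_eq_Suc)


lemma even_complete:
  assumes NR: "\<forall>vs. simple_cycle V E vs \<and> length vs \<le> 10 \<longrightarrow> \<not> removable V E vs"
    and sc: "simple_cycle V E vs" "length vs \<le> 10" "even (length vs)"
    and uv: "u \<in> set vs" "v \<in> set vs" "u \<noteq> v"
  shows "{u,v} \<in> E"
proof -
  have nr: "\<not> removable V E vs" using NR sc by blast
  have dv: "distinct vs" using sc unfolding simple_cycle_def by blast
  have "\<not> is_odd_cycle_graph (set vs) (induced_edges E (set vs))"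
  proof
    assume "is_odd_cycle_graph (set vs) (induced_edges E (set vs))"
    then obtain ws where ws: "distinct ws" "odd (length ws)" "set ws = set vs"
      unfolding is_odd_cycle_graph_def by blast
    then have "length ws = length vs" using dv distinct_card by metis
    then show False using ws sc by simp
  qed
  then have "is_complete_graph (set vs) (induced_edges E (set vs))"
    using nr sc(1) unfolding removable_def by blast
  then have "{u,v} \<in> induced_edges E (set vs)" using uv unfolding is_complete_graph_def by blast
  then show ?thesis unfolding induced_edges_def by blast
qed

context
  fixes V :: "'a set" and E :: "'a set set" and K :: "'a set"
  assumes P: "planar V E"
    and NR: "\<forall>vs. simple_cycle V E vs \<and> length vs \<le> 10 \<longrightarrow> \<not> removable V E vs"
    and FC: "four_clique V E K"
begin

lemma KV: "K \<subseteq> V" and cK: "card K = 4" and clq: "\<And>u v. u \<in> K \<Longrightarrow> v \<in> K \<Longrightarrow> u \<noteq> v \<Longrightarrow> {u,v} \<in> E"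
  using FC unfolding four_clique_def by blast+

lemma other2:
  assumes "a \<in> K" "b \<in> K" "a \<noteq> b"
  obtains c d where "K - {a,b} = {c,d}" "c \<noteq> d"
proof -
  have fK: "finite K" using cK by (intro card_ge_0_finite) simp
  have "card (K - {a,b}) = 2" using cK assms fK by (simp add: card_Diff_subset)
  then show ?thesis using that card_2_iff by metis
qed

lemma key3:
  assumes ab: "a \<in> K" "b \<in> K" "a \<noteq> b" and w: "w \<notin> K" "w \<in> V"
    and e: "{a,w} \<in> E" "{w,b} \<in> E"
  shows False
proof -
  obtain c d where cd: "K - {a,b} = {c,d}" "c \<noteq> d" using other2[OF ab] by blast
  have cK: "c \<in> K" "d \<in> K" "c \<noteq> a" "c \<noteq> b" "d \<noteq> a" "d \<noteq> b" using cd by blast+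
  have wne: "w \<noteq> a" "w \<noteq> b" "w \<noteq> c" "w \<noteq> d" using w ab cK by blast+
  have V: "a \<in> V" "b \<in> V" "c \<in> V" "d \<in> V" using KV ab cK by blast+
  have wc: "{w,z} \<in> E" if z: "z \<in> K" "z \<noteq> a" "z \<noteq> b" for z
  proof -
    have sc: "simple_cycle V E [a,w,b,z]"
      unfolding simple_cycle_def ce4 using ab w wne z V e clq[of b z] clq[of z a] KV
      by auto
    show ?thesis
      by (rule even_complete[OF NR sc]) (use wne z w in auto)
  qed
  have E': "{w,a} \<in> E" "{w,b} \<in> E" "{w,c} \<in> E" "{w,d} \<in> E"
    using e wc[of c] wc[of d] cK by (auto simp: insert_commute)
  show False
  proof (rule planar_no_K5[OF P, of "[a,b,c,d,w]"])
    show "distinct [a,b,c,d,w]" using ab cd cK wne by auto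
    show "length [a,b,c,d,w] = 5" by simp
    show "set [a,b,c,d,w] \<subseteq> V" using V w by auto
    fix u v assume "u \<in> set [a,b,c,d,w]" "v \<in> set [a,b,c,d,w]" "u \<noteq> v"
    then show "{u,v} \<in> E" using clq ab cK E' by (auto simp: insert_commute)
  qed
qed

lemma five:
  assumes dist: "distinct [v0,v1,v2,v3,v4]" and V: "set [v0,v1,v2,v3,v4] \<subseteq> V"
    and e: "{v0,v1} \<in> E" "{v1,v2} \<in> E" "{v2,v3} \<in> E" "{v3,v4} \<in> E" "{v4,v0} \<in> E"
    and K: "v0 \<in> K" "v1 \<in> K"
  shows False
proof -
  have n01: "v0 \<noteq> v1" using dist by simp
  obtain c d where cd: "K - {v0,v1} = {c,d}" "c \<noteq> d" using other2[OF K n01] by blast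
  have six: False if z: "z \<in> K" "z \<notin> set [v0,v1,v2,v3,v4]" for z
  proof -
    have sc: "simple_cycle V E [v0,z,v1,v2,v3,v4]"
      unfolding simple_cycle_def ce6 using dist V z e clq[of v0 z] clq[of z v1] KV K
      by auto
    show False
    proof (rule planar_no_K5[OF P, of "[v0,z,v1,v2,v3]"])
      show "distinct [v0,z,v1,v2,v3]" using dist z by auto
      show "length [v0,z,v1,v2,v3] = 5" by simp
      show "set [v0,z,v1,v2,v3] \<subseteq> V" using V z KV by auto
      fix u v assume "u \<in> set [v0,z,v1,v2,v3]" "v \<in> set [v0,z,v1,v2,v3]" "u \<noteq> v"
      then show "{u,v} \<in> E" by (intro even_complete[OF NR sc]) auto
    qed
  qed
  have cin: "c \<in> {v2,v3,v4}" "d \<in> {v2,v3,v4}" using six[of c] six[of d] cd by auto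
  have KV': "v2 \<in> V" "v3 \<in> V" "v4 \<in> V" using V by auto
  show False
  proof (cases "v2 \<in> K")
    case False
    then have "v3 \<in> K" using cin cd by auto
    then show False using key3[of v1 v3 v2] K False KV' e dist by auto
  next
    case v2: True
    show False
    proof (cases "v3 \<in> K")
      case False
      then have "v4 \<in> K" using cin cd v2 dist by auto
      then show False using key3[of v2 v4 v3] v2 False KV' e dist by auto
    next
      case v3: True
      have "v4 \<notin> K"
      proof
        assume "v4 \<in> K"
        then have "{v2,v3,v4} \<subseteq> {c,d}" using v2 v3 cd dist by auto
        then show False using dist cd by auto
      qed
      then show False using key3[of v3 v0 v4] v3 K KV' e dist by auto
    qed
  qed
qed

end


theorem lemma5p4:
  fixes V :: "'a set" and E :: "'a set set" and K :: "'a set"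
  assumes "simple_graph V E"
    and "planar V E"
    and "\<forall>vs. simple_cycle V E vs \<and> length vs \<le> 10 \<longrightarrow> \<not> removable V E vs"
    and "four_clique V E K"
  shows "(\<forall>vs. simple_cycle V E vs \<and> length vs = 5 \<longrightarrow> cycle_edges vs \<inter> clique_edges K = {})
       \<and> (\<forall>K'. four_clique V E K' \<and> K' \<noteq> K \<longrightarrow> clique_edges K' \<inter> clique_edges K = {})
       \<and> (\<forall>vs. simple_cycle V E vs \<and> length vs = 3 \<and> \<not> set vs \<subseteq> K
              \<longrightarrow> cycle_edges vs \<inter> clique_edges K = {})"
proof (intro conjI allI impI)
  note P = assms(2) and NR = assms(3) and FC = assms(4)
  note f5 = five[OF P NR FC]
  fix vs assume h: "simple_cycle V E vs \<and> length vs = 5"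
  then obtain a b c d e where vs: "vs = [a,b,c,d,e]" using len5 by blast
  have dist: "distinct [a,b,c,d,e]" and V: "set [a,b,c,d,e] \<subseteq> V"
    and E: "{a,b} \<in> E" "{b,c} \<in> E" "{c,d} \<in> E" "{d,e} \<in> E" "{e,a} \<in> E"
    using h unfolding vs simple_cycle_def ce5 by auto
  show "cycle_edges vs \<inter> clique_edges K = {}"
  proof (rule ccontr)
    assume "cycle_edges vs \<inter> clique_edges K \<noteq> {}"
    then obtain ed where ed: "ed \<in> cycle_edges vs" "ed \<in> clique_edges K" by blast
    from ed(2) obtain u v where uv: "ed = {u,v}" "u \<in> K" "v \<in> K" unfolding clique_edges_def by blast
    then have edK: "\<And>x. x \<in> ed \<Longrightarrow> x \<in> K" by blast
    from ed(1) have "ed = {a,b} \<or> ed = {b,c} \<or> ed = {c,d} \<or> ed = {d,e} \<or> ed = {e,a}"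
      unfolding vs ce5 by simp
    then show False
    proof (elim disjE)
      assume "ed = {a,b}" then have "a \<in> K" "b \<in> K" using edK by auto
      then show False by (intro f5[of a b c d e]) (use dist V E in auto)
    next
      assume "ed = {b,c}" then have "b \<in> K" "c \<in> K" using edK by auto
      then show False by (intro f5[of b c d e a]) (use dist V E in auto)
    next
      assume "ed = {c,d}" then have "c \<in> K" "d \<in> K" using edK by auto
      then show False by (intro f5[of c d e a b]) (use dist V E in auto)
    next
      assume "ed = {d,e}" then have "d \<in> K" "e \<in> K" using edK by auto
      then show False by (intro f5[of d e a b c]) (use dist V E in auto)
    next
      assume "ed = {e,a}" then have "e \<in> K" "a \<in> K" using edK by auto
      then show False by (intro f5[of e a b c d]) (use dist V E in auto)
    qed
  qed
next
  note P = assms(2) and NR = assms(3) and FC = assms(4)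
  note k3 = key3[OF P NR FC]
  fix K' assume h: "four_clique V E K' \<and> K' \<noteq> K"
  show "clique_edges K' \<inter> clique_edges K = {}"
  proof (rule ccontr)
    assume "clique_edges K' \<inter> clique_edges K \<noteq> {}"
    then obtain ed where ed: "ed \<in> clique_edges K'" "ed \<in> clique_edges K" by blast
    from ed(2) obtain u v where uv: "ed = {u,v}" "u \<in> K" "v \<in> K" "u \<noteq> v" unfolding clique_edges_def by blast
    from ed(1) obtain u' v' where uv': "ed = {u',v'}" "u' \<in> K'" "v' \<in> K'" unfolding clique_edges_def by blast
    have uK': "u \<in> K'" "v \<in> K'" using uv uv' by auto
    have fK: "finite K" using FC unfolding four_clique_def by (intro card_ge_0_finite) simp
    have cc: "card K' = card K" using h FC unfolding four_clique_def by simp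
    have "\<not> K' \<subseteq> K"
    proof
      assume "K' \<subseteq> K"
      then have "K' = K" using card_subset_eq[OF fK] cc by blast
      with h show False by blast
    qed
    then obtain w where w: "w \<in> K'" "w \<notin> K" by blast
    have hc: "K' \<subseteq> V \<and> card K' = 4 \<and> (\<forall>u\<in>K'. \<forall>v\<in>K'. u \<noteq> v \<longrightarrow> {u, v} \<in> E)"
      using h unfolding four_clique_def by (elim conjE) (intro conjI)
    then have K'V: "K' \<subseteq> V" by (elim conjE)
    have K'E: "{x,y} \<in> E" if "x \<in> K'" "y \<in> K'" "x \<noteq> y" for x y
      using hc that by blast
    have wn: "w \<noteq> u" "w \<noteq> v" using w uv by auto
    show False
      by (rule k3[of u v w]) (use uv w K'E[of u w] K'E[of w v] K'V uK' wn in auto)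
  qed
next
  note P = assms(2) and NR = assms(3) and FC = assms(4)
  note k3 = key3[OF P NR FC]
  fix vs assume h: "simple_cycle V E vs \<and> length vs = 3 \<and> \<not> set vs \<subseteq> K"
  then obtain a b c where vs: "vs = [a,b,c]" using len3 by blast
  have dist: "distinct [a,b,c]" and V: "set [a,b,c] \<subseteq> V"
    and E: "{a,b} \<in> E" "{b,c} \<in> E" "{c,a} \<in> E" and nK: "\<not> set [a,b,c] \<subseteq> K"
    using h unfolding vs simple_cycle_def ce3 by auto
  have E': "{b,a} \<in> E" "{c,b} \<in> E" "{a,c} \<in> E" using E by (simp_all add: insert_commute)
  show "cycle_edges vs \<inter> clique_edges K = {}"
  proof (rule ccontr)
    assume "cycle_edges vs \<inter> clique_edges K \<noteq> {}"
    then obtain ed where ed: "ed \<in> cycle_edges vs" "ed \<in> clique_edges K" by blast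
    from ed(2) obtain u v where uv: "ed = {u,v}" "u \<in> K" "v \<in> K" unfolding clique_edges_def by blast
    then have edK: "\<And>x. x \<in> ed \<Longrightarrow> x \<in> K" by blast
    from ed(1) have "ed = {a,b} \<or> ed = {b,c} \<or> ed = {c,a}"
      unfolding vs ce3 by simp
    then show False
    proof (elim disjE)
      assume "ed = {a,b}" then have "a \<in> K" "b \<in> K" using edK by auto
      then show False by (intro k3[of a b c]) (use dist V E E' nK in auto)
    next
      assume "ed = {b,c}" then have "b \<in> K" "c \<in> K" using edK by auto
      then show False by (intro k3[of b c a]) (use dist V E E' nK in auto)
    next
      assume "ed = {c,a}" then have "c \<in> K" "a \<in> K" using edK by auto
      then show False by (intro k3[of c a b]) (use dist V E E' nK in auto)
    qed
  qed
qed


end
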